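(* Let $\mathcal M\subseteq\mathcal O_{\mathbb C^2,0}^2$ (coordinates $x,y$) be the submodule generated by the columns of $\begin{bmatrix}x&0&y\\ y&x&0\end{bmatrix}$, and let $h=(x,3y)$. Then $h\in(\mathcal M_{S_3})_0$ but $h\notin(\mathcal M_{S_1})_0$. In particular, $\mathcal M_{S_3}\not\subseteq\mathcal M_{S_1}$ in general.
   Context: $\mathcal M$ has generic rank $2$. $\pi_1,\pi_2:\mathbb C^2\times\mathbb C^2\to\mathbb C^2$ are the projections. For $g\in\mathcal O^q$, $g_D=(g\circ\pi_1,g\circ\pi_2)$; for a submodule or ideal $N$, $N_D$ is generated by $\{g_D:g\in N\}$. $\overline{\cdot}$ denotes integral closure. For an ideal $I\subseteq\mathcal O_{\mathbb C^2,0}$, its Lipschitz saturation is $I_S=\{f:f_D\in\overline{I_D}\text{ at }(0,0)\}$. $J_k(N)$ is the ideal of $k\times k$ minors of a matrix of generators of $N$, $(h,\mathcal M)$ the module generated by $h$ and $\mathcal M$. Definitions: $(\mathcal M_{S_1})_0=\{h:h_D\in\overline{\mathcal M_D}\text{ at }(0,0)\}$; $(\mathcal M_{S_3})_0=\{h:J_2((h,\mathcal M))\subseteq(J_2(\mathcal M))_S\text{ at }0\}$. *)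

theory Defs
  imports "HOL-Analysis.Analysis"
begin

section \<open>Complex scalar multiplication on C^n modelled by nested products of complex\<close>

class cscal =
  fixes cscal :: "complex \<Rightarrow> 'a \<Rightarrow> 'a"

instantiation complex :: cscal
begin
definition cscal_complex :: "complex \<Rightarrow> complex \<Rightarrow> complex" where
  "cscal_complex c z = c * z"
instance ..
end

instantiation prod :: (cscal, cscal) cscal
begin
definition cscal_prod :: "complex \<Rightarrow> 'a \<times> 'b \<Rightarrow> 'a \<times> 'b" where
  "cscal_prod c p = (cscal c (fst p), cscal c (snd p))"
instance ..
end

definition holo_at :: "('a::{cscal,real_normed_vector} \<Rightarrow> 'b::{cscal,real_normed_vector}) \<Rightarrow> 'a \<Rightarrow> bool" where
  "holo_at f a \<longleftrightarrow> (\<exists>U. open U \<and> a \<in> U \<and>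
     (\<forall>z\<in>U. \<exists>L. (f has_derivative L) (at z) \<and> (\<forall>c v. L (cscal c v) = cscal c (L v))))"

definition span_at :: "'a::{cscal,real_normed_vector} \<Rightarrow> ('a \<Rightarrow> 'b::{cscal,comm_monoid_add}) set
     \<Rightarrow> ('a \<Rightarrow> 'b) \<Rightarrow> bool" where
  "span_at a G h \<longleftrightarrow> (\<exists>(n::nat) (b::nat \<Rightarrow> 'a \<Rightarrow> complex) g.
     (\<forall>i<n. holo_at (b i) a \<and> g i \<in> G) \<and>
     eventually (\<lambda>z. h z = (\<Sum>i<n. cscal (b i z) (g i z))) (nhds a))"

text \<open>Integral closure at a (curve criterion): h is in the integral closure of the module
  generated by G iff for every holomorphic curve germ phi:(C,0)->(X,a), h o phi lies in
  the O_1-module generated by the pull-backs g o phi, g in G.\<close>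
definition intclos_at :: "'a::{cscal,real_normed_vector} \<Rightarrow> ('a \<Rightarrow> 'b::{cscal,real_normed_vector}) set
     \<Rightarrow> ('a \<Rightarrow> 'b) \<Rightarrow> bool" where
  "intclos_at a G h \<longleftrightarrow> holo_at h a \<and>
     (\<forall>\<phi>::complex \<Rightarrow> 'a. holo_at \<phi> 0 \<and> \<phi> 0 = a \<longrightarrow> span_at 0 ((\<lambda>g. g \<circ> \<phi>) ` G) (h \<circ> \<phi>))"

type_synonym C2 = "complex \<times> complex"

definition dbl :: "(C2 \<Rightarrow> 'b) \<Rightarrow> (C2 \<times> C2 \<Rightarrow> 'b \<times> 'b)" where
  "dbl g = (\<lambda>p. (g (fst p), g (snd p)))"

definition gen_at0 :: "(C2 \<Rightarrow> 'b::{cscal,comm_monoid_add}) set \<Rightarrow> (C2 \<Rightarrow> 'b) set" where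
  "gen_at0 G = {g. span_at 0 G g}"

definition lip_sat :: "(C2 \<Rightarrow> complex) set \<Rightarrow> (C2 \<Rightarrow> complex) set" where
  "lip_sat Igens = {f. holo_at f 0 \<and> intclos_at (0,0) (dbl ` gen_at0 Igens) (dbl f)}"

text \<open>Ideal generators of J_2: all 2x2 minors of the matrix whose columns are the generators.\<close>
definition J2 :: "(C2 \<Rightarrow> C2) set \<Rightarrow> (C2 \<Rightarrow> complex) set" where
  "J2 G = {(\<lambda>z. fst (u z) * snd (v z) - snd (u z) * fst (v z)) | u v. u \<in> G \<and> v \<in> G}"

definition MS1 :: "(C2 \<Rightarrow> C2) set \<Rightarrow> (C2 \<Rightarrow> C2) set" where
  "MS1 Mgens = {h. holo_at h 0 \<and> intclos_at (0,0) (dbl ` gen_at0 Mgens) (dbl h)}"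

definition MS3 :: "(C2 \<Rightarrow> C2) set \<Rightarrow> (C2 \<Rightarrow> C2) set" where
  "MS3 Mgens = {h. holo_at h 0 \<and> gen_at0 (J2 (insert h Mgens)) \<subseteq> lip_sat (J2 Mgens)}"

definition Mex :: "(C2 \<Rightarrow> C2) set" where
  "Mex = {(\<lambda>(x,y). (x, y)), (\<lambda>(x,y). (0, x)), (\<lambda>(x,y). (y, 0))}"

end

theory Submission imports Defs begin

lemma holo_at_ev:
  "holo_at f a \<longleftrightarrow> eventually (\<lambda>z. \<exists>L. (f has_derivative L) (at z) \<and> (\<forall>c v. L (cscal c v) = cscal c (L v))) (nhds a)"
  unfolding holo_at_def eventually_nhds by blast

lemma holo_const: "holo_at (\<lambda>z. c::complex) a"
  unfolding holo_at_def
  by (rule exI[of _ UNIV]) (auto intro!: exI[of _ "\<lambda>_. 0"] simp: cscal_complex_def)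

lemma holo_add:
  fixes f g :: "'a::{cscal,real_normed_vector} \<Rightarrow> complex"
  assumes "holo_at f a" "holo_at g a"
  shows "holo_at (\<lambda>z. f z + g z) a"
proof -
  have "eventually (\<lambda>z. (\<exists>L. (f has_derivative L) (at z) \<and> (\<forall>c v. L (cscal c v) = cscal c (L v))) \<and>
     (\<exists>L. (g has_derivative L) (at z) \<and> (\<forall>c v. L (cscal c v) = cscal c (L v)))) (nhds a)"
    using assms unfolding holo_at_ev by (rule eventually_conj)
  then show ?thesis unfolding holo_at_ev
  proof (rule eventually_mono)
    fix z assume "(\<exists>L. (f has_derivative L) (at z) \<and> (\<forall>c v. L (cscal c v) = cscal c (L v))) \<and>
     (\<exists>L. (g has_derivative L) (at z) \<and> (\<forall>c v. L (cscal c v) = cscal c (L v)))"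
    then obtain L1 L2 where 1: "(f has_derivative L1) (at z)" "\<forall>c v. L1 (cscal c v) = cscal c (L1 v)"
      and 2: "(g has_derivative L2) (at z)" "\<forall>c v. L2 (cscal c v) = cscal c (L2 v)" by blast
    show "\<exists>L. ((\<lambda>z. f z + g z) has_derivative L) (at z) \<and> (\<forall>c v. L (cscal c v) = cscal c (L v))"
      by (rule exI[of _ "\<lambda>v. L1 v + L2 v"]) (use 1 2 in \<open>auto intro!: has_derivative_add simp: cscal_complex_def algebra_simps\<close>)
  qed
qed

lemma holo_mult:
  fixes f g :: "'a::{cscal,real_normed_vector} \<Rightarrow> complex"
  assumes "holo_at f a" "holo_at g a"
  shows "holo_at (\<lambda>z. f z * g z) a"
proof -
  have "eventually (\<lambda>z. (\<exists>L. (f has_derivative L) (at z) \<and> (\<forall>c v. L (cscal c v) = cscal c (L v))) \<and>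
     (\<exists>L. (g has_derivative L) (at z) \<and> (\<forall>c v. L (cscal c v) = cscal c (L v)))) (nhds a)"
    using assms unfolding holo_at_ev by (rule eventually_conj)
  then show ?thesis unfolding holo_at_ev
  proof (rule eventually_mono)
    fix z assume "(\<exists>L. (f has_derivative L) (at z) \<and> (\<forall>c v. L (cscal c v) = cscal c (L v))) \<and>
     (\<exists>L. (g has_derivative L) (at z) \<and> (\<forall>c v. L (cscal c v) = cscal c (L v)))"
    then obtain L1 L2 where 1: "(f has_derivative L1) (at z)" "\<forall>c v. L1 (cscal c v) = cscal c (L1 v)"
      and 2: "(g has_derivative L2) (at z)" "\<forall>c v. L2 (cscal c v) = cscal c (L2 v)" by blast
    show "\<exists>L. ((\<lambda>z. f z * g z) has_derivative L) (at z) \<and> (\<forall>c v. L (cscal c v) = cscal c (L v))"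
      apply (rule exI[of _ "\<lambda>v. f z * L2 v + L1 v * g z"])
      using has_derivative_mult[OF 1(1) 2(1)] 1(2) 2(2) by (auto simp: cscal_complex_def algebra_simps)
  qed
qed

lemma holo_diff:
  fixes f g :: "'a::{cscal,real_normed_vector} \<Rightarrow> complex"
  assumes "holo_at f a" "holo_at g a"
  shows "holo_at (\<lambda>z. f z - g z) a"
proof -
  have "holo_at (\<lambda>z. f z + (-1) * g z) a"
    by (intro holo_add holo_mult holo_const assms)
  then show ?thesis by simp
qed

lemma holo_sum:
  fixes f :: "nat \<Rightarrow> 'a::{cscal,real_normed_vector} \<Rightarrow> complex"
  assumes "\<forall>i<n. holo_at (f i) a"
  shows "holo_at (\<lambda>z. \<Sum>i<n. f i z) a"
  using assms
proof (induction n)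
  case 0 then show ?case using holo_const[of 0 a] by simp
next
  case (Suc n) then show ?case by (simp add: holo_add)
qed

lemma holo_fst: "holo_at (\<lambda>z::C2. fst z) a"
  unfolding holo_at_def
  by (rule exI[of _ UNIV]) (auto intro!: exI[of _ "fst"] has_derivative_fst[OF has_derivative_ident] simp: cscal_complex_def cscal_prod_def)

lemma holo_snd: "holo_at (\<lambda>z::C2. snd z) a"
  unfolding holo_at_def
  by (rule exI[of _ UNIV]) (auto intro!: exI[of _ "snd"] has_derivative_snd[OF has_derivative_ident] simp: cscal_complex_def cscal_prod_def)

lemma holo_transfer:
  assumes "eventually (\<lambda>z. f z = g z) (nhds a)" "holo_at g a"
  shows "holo_at f a"
proof -
  obtain U where U: "open U" "a \<in> U" "\<forall>z\<in>U. f z = g z" using assms(1) unfolding eventually_nhds by blast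
  obtain V where V: "open V" "a \<in> V" "\<forall>z\<in>V. \<exists>L. (g has_derivative L) (at z) \<and> (\<forall>c v. L (cscal c v) = cscal c (L v))"
    using assms(2) unfolding holo_at_def by blast
  show ?thesis unfolding holo_at_def
  proof (intro exI[of _ "U \<inter> V"] conjI ballI)
    fix z assume z: "z \<in> U \<inter> V"
    then obtain L where L: "(g has_derivative L) (at z)" "\<forall>c v. L (cscal c v) = cscal c (L v)" using V by blast
    have "(f has_derivative L) (at z)"
      by (rule has_derivative_transform_within_open[OF L(1), of "U \<inter> V"]) (use U V z in auto)
    then show "\<exists>L. (f has_derivative L) (at z) \<and> (\<forall>c v. L (cscal c v) = cscal c (L v))" using L(2) by blast
  qed (use U V in auto)
qed

lemma holo_dbl:
  fixes f :: "C2 \<Rightarrow> complex"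
  assumes "holo_at f a"
  shows "holo_at (dbl f) (a,a)"
proof -
  obtain U where U: "open U" "a \<in> U" "\<forall>z\<in>U. \<exists>L. (f has_derivative L) (at z) \<and> (\<forall>c v. L (cscal c v) = cscal c (L v))"
    using assms unfolding holo_at_def by blast
  show ?thesis unfolding holo_at_def
  proof (intro exI[of _ "U \<times> U"] conjI ballI)
    fix p assume p: "p \<in> U \<times> U"
    obtain L1 where L1: "(f has_derivative L1) (at (fst p))" "\<forall>c v. L1 (cscal c v) = cscal c (L1 v)"
      using U p by (auto simp: mem_Times_iff)
    obtain L2 where L2: "(f has_derivative L2) (at (snd p))" "\<forall>c v. L2 (cscal c v) = cscal c (L2 v)"
      using U p by (auto simp: mem_Times_iff)
    have d1: "((\<lambda>q. f (fst q)) has_derivative (\<lambda>v. L1 (fst v))) (at p)"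
      using has_derivative_compose[OF has_derivative_fst[OF has_derivative_ident] L1(1)] by simp
    have d2: "((\<lambda>q. f (snd q)) has_derivative (\<lambda>v. L2 (snd v))) (at p)"
      using has_derivative_compose[OF has_derivative_snd[OF has_derivative_ident] L2(1)] by simp
    have "(dbl f has_derivative (\<lambda>v. (L1 (fst v), L2 (snd v)))) (at p)"
      unfolding dbl_def by (rule has_derivative_Pair[OF d1 d2])
    then show "\<exists>L. (dbl f has_derivative L) (at p) \<and> (\<forall>c v. L (cscal c v) = cscal c (L v))"
      using L1(2) L2(2) by (auto simp: cscal_prod_def)
  qed (use U in \<open>auto intro: open_Times\<close>)
qed

lemma holo_h: "holo_at (\<lambda>(x::complex,y::complex). (x, 3 * y)) a"
proof -
  have e: "(\<lambda>(x::complex,y::complex). (x, 3 * y)) = (\<lambda>p. (fst p, 3 * snd p))" by auto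
  have "((\<lambda>p::C2. (fst p, 3 * snd p)) has_derivative (\<lambda>p. (fst p, 3 * snd p))) (at z)" for z
    by (auto intro!: derivative_eq_intros)
  then show ?thesis unfolding holo_at_def e
    by (intro exI[of _ UNIV]) (auto intro!: exI[of _ "\<lambda>p. (fst p, 3 * snd p)"] simp: cscal_prod_def cscal_complex_def)
qed

lemma Mex_holo: "u \<in> Mex \<Longrightarrow> holo_at (\<lambda>z. fst (u z)) a \<and> holo_at (\<lambda>z. snd (u z)) a"
  unfolding Mex_def by (auto simp: case_prod_unfold holo_fst holo_snd holo_const)

definition minor :: "(C2 \<Rightarrow> C2) \<Rightarrow> (C2 \<Rightarrow> C2) \<Rightarrow> C2 \<Rightarrow> complex" where
  "minor u v = (\<lambda>z. fst (u z) * snd (v z) - snd (u z) * fst (v z))"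

lemma J2_minor: "J2 G = {minor u v | u v. u \<in> G \<and> v \<in> G}"
  unfolding J2_def minor_def by simp

lemma minor_holo: "u \<in> Mex \<Longrightarrow> v \<in> Mex \<Longrightarrow> holo_at (minor u v) a"
  unfolding minor_def using Mex_holo by (intro holo_diff holo_mult) auto

lemma J2_ins:
  assumes "k \<in> J2 (insert (\<lambda>(x,y). (x, 3 * y)) Mex)"
  shows "\<exists>c u v. u \<in> Mex \<and> v \<in> Mex \<and> k = (\<lambda>z. c * minor u v z)"
proof -
  define h :: "C2 \<Rightarrow> C2" where "h = (\<lambda>(x,y). (x, 3 * y))"
  define g1 :: "C2 \<Rightarrow> C2" where "g1 = (\<lambda>(x,y). (x, y))"
  define g2 :: "C2 \<Rightarrow> C2" where "g2 = (\<lambda>(x,y). (0, x))"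
  define g3 :: "C2 \<Rightarrow> C2" where "g3 = (\<lambda>(x,y). (y, 0))"
  have M: "Mex = {g1, g2, g3}" unfolding Mex_def g1_def g2_def g3_def ..
  obtain u v where k: "k = minor u v" and u: "u = h \<or> u \<in> Mex" and v: "v = h \<or> v \<in> Mex"
    using assms unfolding J2_minor h_def by auto
  have hh: "minor h h = (\<lambda>z. 0 * minor g1 g1 z)" unfolding minor_def h_def g1_def by (auto simp: case_prod_unfold)
  have h1: "minor h g1 = (\<lambda>z. (-2) * minor g3 g2 z)" unfolding minor_def h_def g1_def g2_def g3_def by (auto simp: case_prod_unfold algebra_simps)
  have h2: "minor h g2 = (\<lambda>z. 1 * minor g1 g2 z)" unfolding minor_def h_def g1_def g2_def g3_def by (auto simp: case_prod_unfold algebra_simps)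
  have h3: "minor h g3 = (\<lambda>z. 3 * minor g1 g3 z)" unfolding minor_def h_def g1_def g2_def g3_def by (auto simp: case_prod_unfold algebra_simps)
  have h1': "minor g1 h = (\<lambda>z. 2 * minor g3 g2 z)" unfolding minor_def h_def g1_def g2_def g3_def by (auto simp: case_prod_unfold algebra_simps)
  have h2': "minor g2 h = (\<lambda>z. 1 * minor g2 g1 z)" unfolding minor_def h_def g1_def g2_def g3_def by (auto simp: case_prod_unfold algebra_simps)
  have h3': "minor g3 h = (\<lambda>z. 3 * minor g3 g1 z)" unfolding minor_def h_def g1_def g2_def g3_def by (auto simp: case_prod_unfold algebra_simps)
  have gM: "g1 \<in> Mex" "g2 \<in> Mex" "g3 \<in> Mex" unfolding M by auto
  show ?thesis
  proof (cases "u = h")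
    case True
    show ?thesis
    proof (cases "v = h")
      case True with \<open>u = h\<close> show ?thesis unfolding k using hh gM by blast
    next
      case False
      then have "v = g1 \<or> v = g2 \<or> v = g3" using v M by auto
      then show ?thesis unfolding k \<open>u = h\<close> using h1 h2 h3 gM by blast
    qed
  next
    case False
    then have uM: "u \<in> Mex" using u by auto
    show ?thesis
    proof (cases "v = h")
      case True
      have "u = g1 \<or> u = g2 \<or> u = g3" using uM M by auto
      then show ?thesis unfolding k True using h1' h2' h3' gM by blast
    next
      case False
      then have "v \<in> Mex" using v by auto
      then show ?thesis unfolding k using uM by (intro exI[of _ 1] exI[of _ u] exI[of _ v]) simp
    qed
  qed
qed

lemma holo_cont: "holo_at f a \<Longrightarrow> isCont f a"
  unfolding holo_at_def using has_derivative_continuous by blast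

lemma MS3_part: "(\<lambda>(x,y). (x, 3 * y)) \<in> MS3 Mex"
  unfolding MS3_def
proof (intro CollectI conjI subsetI holo_h)
  fix f assume "f \<in> gen_at0 (J2 (insert (\<lambda>(x,y). (x, 3 * y)) Mex))"
  then obtain n :: nat and b k where hb: "\<forall>i<n. holo_at (b i) 0 \<and> k i \<in> J2 (insert (\<lambda>(x,y). (x, 3 * y)) Mex)"
    and ev: "eventually (\<lambda>z. f z = (\<Sum>i<n. cscal (b i z) (k i z))) (nhds 0)"
    unfolding gen_at0_def span_at_def by blast
  have "\<forall>i. \<exists>c u v. i < n \<longrightarrow> u \<in> Mex \<and> v \<in> Mex \<and> k i = (\<lambda>z. c * minor u v z)"
    using J2_ins hb by blast
  then obtain C U V where CUV: "\<forall>i<n. U i \<in> Mex \<and> V i \<in> Mex \<and> k i = (\<lambda>z. C i * minor (U i) (V i) z)"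
    by metis
  have ev': "eventually (\<lambda>z. f z = (\<Sum>i<n. cscal (b i z * C i) (minor (U i) (V i) z))) (nhds 0)"
    using ev
  proof (rule eventually_mono)
    fix z assume "f z = (\<Sum>i<n. cscal (b i z) (k i z))"
    also have "\<dots> = (\<Sum>i<n. cscal (b i z * C i) (minor (U i) (V i) z))"
      by (rule sum.cong) (use CUV in \<open>auto simp: cscal_complex_def\<close>)
    finally show "f z = (\<Sum>i<n. cscal (b i z * C i) (minor (U i) (V i) z))" .
  qed
  have fgen: "f \<in> gen_at0 (J2 Mex)"
    unfolding gen_at0_def span_at_def
    apply (rule CollectI, rule exI[of _ n], rule exI[of _ "\<lambda>i z. b i z * C i"], rule exI[of _ "\<lambda>i. minor (U i) (V i)"])
  proof (intro conjI allI impI)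
    fix i assume i: "i < n"
    show "holo_at (\<lambda>z. b i z * C i) 0" using hb i by (intro holo_mult holo_const) auto
    show "minor (U i) (V i) \<in> J2 Mex" unfolding J2_minor using CUV i by blast
  next
    show "eventually (\<lambda>z. f z = (\<Sum>i<n. cscal (b i z * C i) (minor (U i) (V i) z))) (nhds 0)" by (rule ev')
  qed
  have hf: "holo_at f 0"
    apply (rule holo_transfer[OF ev'])
    unfolding cscal_complex_def
    apply (rule holo_sum)
    using hb CUV by (intro allI impI holo_mult holo_const minor_holo) auto
  show "f \<in> lip_sat (J2 Mex)"
    unfolding lip_sat_def intclos_at_def
  proof (intro CollectI conjI hf allI impI)
    show "holo_at (dbl f) (0, 0)" using holo_dbl[OF hf] by simp
    fix \<phi> :: "complex \<Rightarrow> C2 \<times> C2"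
    show "span_at 0 ((\<lambda>g. g \<circ> \<phi>) ` dbl ` gen_at0 (J2 Mex)) (dbl f \<circ> \<phi>)"
      unfolding span_at_def
      apply (rule exI[of _ 1], rule exI[of _ "\<lambda>i z. 1"], rule exI[of _ "\<lambda>i. dbl f \<circ> \<phi>"])
    proof (intro conjI allI impI)
      fix i :: nat assume "i < 1"
      show "holo_at (\<lambda>z::complex. 1::complex) 0" by (rule holo_const)
      show "dbl f \<circ> \<phi> \<in> (\<lambda>g. g \<circ> \<phi>) ` dbl ` gen_at0 (J2 Mex)" using fgen by blast
    next
      show "eventually (\<lambda>z. (dbl f \<circ> \<phi>) z = (\<Sum>i::nat<1. cscal 1 ((dbl f \<circ> \<phi>) z))) (nhds 0)"
        by (simp add: cscal_prod_def cscal_complex_def)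
    qed
  qed
qed

lemma key:
  assumes "g \<in> gen_at0 Mex"
  shows "\<exists>r. (r \<longlongrightarrow> 0) (at 0) \<and> eventually (\<lambda>t. fst (g (t,0)) - snd (g (0,t)) = t * r t) (at (0::complex))"
proof -
  obtain n :: nat and b m where hb: "\<forall>i<n. holo_at (b i) 0 \<and> m i \<in> Mex"
    and ev: "eventually (\<lambda>z. g z = (\<Sum>i<n. cscal (b i z) (m i z))) (nhds 0)"
    using assms unfolding gen_at0_def span_at_def by blast
  have mex: "u \<in> Mex \<Longrightarrow> fst (u (t,0)) = t * fst (u (1,0)) \<and> snd (u (0,t)) = t * fst (u (1,0))" for u t
    unfolding Mex_def by auto
  define r where "r t = (\<Sum>i<n. fst (m i (1,0)) * (b i (t,0) - b i (0,t)))" for t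
  have l1: "((\<lambda>t::complex. (t, 0::complex)) \<longlongrightarrow> 0) (at 0)"
    by (auto simp: zero_prod_def intro!: tendsto_eq_intros)
  have l2: "((\<lambda>t::complex. (0::complex, t)) \<longlongrightarrow> 0) (at 0)"
    by (auto simp: zero_prod_def intro!: tendsto_eq_intros)
  have "(r \<longlongrightarrow> 0) (at 0)"
    unfolding r_def
  proof (rule tendsto_null_sum)
    fix i assume "i \<in> {..<n}"
    then have c: "isCont (b i) 0" using hb holo_cont by auto
    have "((\<lambda>t. b i (t,0)) \<longlongrightarrow> b i 0) (at 0)" using isCont_tendsto_compose[OF c l1] .
    moreover have "((\<lambda>t. b i (0,t)) \<longlongrightarrow> b i 0) (at 0)" using isCont_tendsto_compose[OF c l2] .
    ultimately have "((\<lambda>t. fst (m i (1,0)) * (b i (t,0) - b i (0,t))) \<longlongrightarrow> fst (m i (1,0)) * (b i 0 - b i 0)) (at 0)"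
      by (intro tendsto_intros)
    then show "((\<lambda>t. fst (m i (1,0)) * (b i (t,0) - b i (0,t))) \<longlongrightarrow> 0) (at 0)" by simp
  qed
  moreover have "eventually (\<lambda>t. fst (g (t,0)) - snd (g (0,t)) = t * r t) (at (0::complex))"
  proof -
    have e1: "eventually (\<lambda>t. g (t,0) = (\<Sum>i<n. cscal (b i (t,0)) (m i (t,0)))) (at (0::complex))"
      using eventually_compose_filterlim[OF ev l1] .
    have e2: "eventually (\<lambda>t. g (0,t) = (\<Sum>i<n. cscal (b i (0,t)) (m i (0,t)))) (at (0::complex))"
      using eventually_compose_filterlim[OF ev l2] .
    show ?thesis using eventually_conj[OF e1 e2]
    proof (rule eventually_mono)
      fix t :: complex assume "g (t,0) = (\<Sum>i<n. cscal (b i (t,0)) (m i (t,0))) \<and> g (0,t) = (\<Sum>i<n. cscal (b i (0,t)) (m i (0,t)))"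
      then have "fst (g (t,0)) - snd (g (0,t)) = (\<Sum>i<n. b i (t,0) * fst (m i (t,0))) - (\<Sum>i<n. b i (0,t) * snd (m i (0,t)))"
        by (simp add: fst_sum snd_sum cscal_prod_def cscal_complex_def)
      also have "\<dots> = (\<Sum>i<n. t * (fst (m i (1,0)) * (b i (t,0) - b i (0,t))))"
        unfolding sum_subtractf[symmetric]
      proof (rule sum.cong[OF refl])
        fix i assume "i \<in> {..<n}"
        then have "m i \<in> Mex" using hb by auto
        from mex[OF this, of t]
        show "b i (t,0) * fst (m i (t,0)) - b i (0,t) * snd (m i (0,t)) = t * (fst (m i (1,0)) * (b i (t,0) - b i (0,t)))"
          by (simp add: algebra_simps)
      qed
      also have "\<dots> = t * r t" unfolding r_def by (simp add: sum_distrib_left)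
      finally show "fst (g (t,0)) - snd (g (0,t)) = t * r t" .
    qed
  qed
  ultimately show ?thesis by blast
qed

lemma MS1_part: "(\<lambda>(x,y). (x, 3 * y)) \<notin> MS1 Mex"
proof
  define h :: "C2 \<Rightarrow> C2" where "h = (\<lambda>(x,y). (x, 3 * y))"
  assume "(\<lambda>(x,y). (x, 3 * y)) \<in> MS1 Mex"
  then have ic: "intclos_at (0,0) (dbl ` gen_at0 Mex) (dbl h)" unfolding MS1_def h_def by blast
  define \<phi> :: "complex \<Rightarrow> C2 \<times> C2" where "\<phi> = (\<lambda>t. ((t,0),(0,t)))"
  have dphi: "(\<phi> has_derivative \<phi>) (at z)" for z
    unfolding \<phi>_def
    by (rule bounded_linear_imp_has_derivative) (intro bounded_linear_Pair bounded_linear_ident bounded_linear_zero)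
  have lin: "\<forall>c v. \<phi> (cscal c v) = cscal c (\<phi> v)"
    by (simp add: \<phi>_def cscal_prod_def cscal_complex_def)
  have hphi: "holo_at \<phi> 0" unfolding holo_at_def
    using dphi lin by (intro exI[of _ UNIV]) blast
  have phi0: "\<phi> 0 = (0,0)" by (simp add: \<phi>_def zero_prod_def)
  have "span_at 0 ((\<lambda>g. g \<circ> \<phi>) ` dbl ` gen_at0 Mex) (dbl h \<circ> \<phi>)"
    using ic hphi phi0 unfolding intclos_at_def by blast
  then obtain n :: nat and \<beta> G where hb: "\<forall>i<n. holo_at (\<beta> i) 0 \<and> G i \<in> (\<lambda>g. g \<circ> \<phi>) ` dbl ` gen_at0 Mex"
    and ev: "eventually (\<lambda>t. (dbl h \<circ> \<phi>) t = (\<Sum>i<n. cscal (\<beta> i t) (G i t))) (nhds 0)"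
    unfolding span_at_def by blast
  have "\<forall>i. \<exists>g. i < n \<longrightarrow> g \<in> gen_at0 Mex \<and> G i = dbl g \<circ> \<phi>" using hb by blast
  from choice[OF this] obtain g where hg: "\<forall>i<n. g i \<in> gen_at0 Mex \<and> G i = dbl (g i) \<circ> \<phi>" by blast
  have "\<forall>i. \<exists>r. i < n \<longrightarrow> (r \<longlongrightarrow> 0) (at 0) \<and> eventually (\<lambda>t. fst (g i (t,0)) - snd (g i (0,t)) = t * r t) (at (0::complex))"
    using hg key by blast
  from choice[OF this] obtain r where hr: "\<forall>i<n. (r i \<longlongrightarrow> 0) (at 0) \<and> eventually (\<lambda>t. fst (g i (t,0)) - snd (g i (0,t)) = t * r i t) (at (0::complex))"
    by blast
  have evr: "eventually (\<lambda>t. \<forall>i\<in>{..<n}. fst (g i (t,0)) - snd (g i (0,t)) = t * r i t) (at (0::complex))"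
    by (rule eventually_ball_finite) (use hr in auto)
  have ev0: "eventually (\<lambda>t. t \<noteq> 0) (at (0::complex))"
    by (simp add: eventually_at_filter)
  have ev1: "eventually (\<lambda>t. (dbl h \<circ> \<phi>) t = (\<Sum>i<n. cscal (\<beta> i t) (G i t))) (at 0)"
    unfolding eventually_at_filter by (rule eventually_mono[OF ev]) simp
  have evm: "eventually (\<lambda>t. (\<Sum>i<n. \<beta> i t * r i t) = -2) (at (0::complex))"
    using eventually_conj[OF ev0 eventually_conj[OF evr ev1]]
  proof (rule eventually_mono)
    fix t :: complex
    assume A: "t \<noteq> 0 \<and> (\<forall>i\<in>{..<n}. fst (g i (t,0)) - snd (g i (0,t)) = t * r i t) \<and>
      (dbl h \<circ> \<phi>) t = (\<Sum>i<n. cscal (\<beta> i t) (G i t))"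
    define P :: "(complex \<times> complex) \<times> complex \<times> complex \<Rightarrow> complex" where "P w = fst (fst w) - snd (snd w)" for w
    have Psum: "P (\<Sum>i\<in>I. cscal (a i) (w i)) = (\<Sum>i\<in>I. a i * P (w i))" for I a w
      unfolding P_def by (simp add: fst_sum snd_sum cscal_prod_def cscal_complex_def sum_subtractf right_diff_distrib)
    have "-2 * t = P ((dbl h \<circ> \<phi>) t)" by (simp add: P_def h_def \<phi>_def dbl_def)
    also have "\<dots> = (\<Sum>i<n. \<beta> i t * P (G i t))" using A Psum by simp
    also have "\<dots> = (\<Sum>i<n. \<beta> i t * (t * r i t))"
    proof (rule sum.cong[OF refl])
      fix i assume i: "i \<in> {..<n}"
      have "P (G i t) = fst (g i (t,0)) - snd (g i (0,t))"
        using hg i by (simp add: P_def dbl_def \<phi>_def)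
      then show "\<beta> i t * P (G i t) = \<beta> i t * (t * r i t)" using A i by simp
    qed
    also have "\<dots> = t * (\<Sum>i<n. \<beta> i t * r i t)" by (simp add: sum_distrib_left algebra_simps)
    finally have E: "t * (\<Sum>i<n. \<beta> i t * r i t) = -2 * t" by simp
    have "t * ((\<Sum>i<n. \<beta> i t * r i t) + 2) = t * (\<Sum>i<n. \<beta> i t * r i t) + t * 2"
      by (rule distrib_left)
    also have "\<dots> = 0" unfolding E by simp
    finally have "(\<Sum>i<n. \<beta> i t * r i t) + 2 = 0" using conjunct1[OF A] by simp
    then show "(\<Sum>i<n. \<beta> i t * r i t) = -2" by (simp only: eq_neg_iff_add_eq_0)
  qed
  have "((\<lambda>t. \<Sum>i<n. \<beta> i t * r i t) \<longlongrightarrow> 0) (at 0)"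
  proof (rule tendsto_null_sum)
    fix i assume "i \<in> {..<n}"
    then have c: "isCont (\<beta> i) 0" and r0: "(r i \<longlongrightarrow> 0) (at 0)" using hb hr holo_cont by auto
    have "((\<lambda>t. \<beta> i t * r i t) \<longlongrightarrow> \<beta> i 0 * 0) (at 0)"
      by (intro tendsto_mult r0) (use c in \<open>simp add: isCont_def\<close>)
    then show "((\<lambda>t. \<beta> i t * r i t) \<longlongrightarrow> 0) (at 0)" by simp
  qed
  then have "((\<lambda>t. -2::complex) \<longlongrightarrow> 0) (at (0::complex))"
    by (rule Lim_transform_eventually[OF _ evm])
  then show False by (simp add: tendsto_const_iff)
qed

theorem mainTheorem16:
  shows "(\<lambda>(x,y). (x, 3 * y)) \<in> MS3 Mex \<and> (\<lambda>(x,y). (x, 3 * y)) \<notin> MS1 Mex"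
  using MS3_part MS1_part by blast

end
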